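(* Let $q$ be a prime power, $1\le\ell\le q$ an integer, and $\omega_1,\omega_2\in(0,1-\ell/q)$. Let $A,B,T\subseteq\mathbb{F}_q$ each have size $\ell$, and let $X_1\sim\mathrm{Unif}(A)$, $X_2\sim\mathrm{Unif}(B)$, $Y_1\sim\mathrm{Unif}(\mathbb{F}_q\setminus A)$, $Y_2\sim\mathrm{Unif}(\mathbb{F}_q\setminus B)$ be independent. Then $$(1-\omega_1)(1-\omega_2)\Pr[X_1+X_2\in T]+\omega_1(1-\omega_2)\Pr[X_1+Y_2\in T]+\omega_2(1-\omega_1)\Pr[Y_1+X_2\in T]+\omega_1\omega_2\Pr[Y_1+Y_2\in T]$$ $$\le(1-\omega_1)(1-\omega_2)+\omega_1\omega_2\cdot\frac{\ell}{q-\ell}.$$ *)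

theory Defs
  imports "HOL-Probability.Probability"
begin

definition sum_in_prob :: "'a::plus pmf \<Rightarrow> 'a pmf \<Rightarrow> 'a set \<Rightarrow> real" where
  "sum_in_prob P Q T = measure_pmf.prob (pair_pmf P Q) {p. fst p + snd p \<in> T}"

end

theory Submission
  imports Defs
begin

definition ff :: "'a::{finite,field} set \<Rightarrow> 'a \<Rightarrow> 'a \<Rightarrow> real" where
  "ff T x y = (if x + y \<in> T then 1 else 0)"

lemma sip_sum:
  fixes P Q :: "'a::{finite,field} pmf"
  shows "sum_in_prob P Q T = (\<Sum>x\<in>UNIV. \<Sum>y\<in>UNIV. pmf P x * pmf Q y * ff T x y)"
proof -
  have "sum_in_prob P Q T = (\<Sum>p\<in>{p. fst p + snd p \<in> T}. pmf (pair_pmf P Q) p)"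
    unfolding sum_in_prob_def by (rule measure_measure_pmf_finite) simp
  also have "\<dots> = (\<Sum>p\<in>UNIV. pmf (pair_pmf P Q) p * ff T (fst p) (snd p))"
    by (rule sum.mono_neutral_cong_left) (auto simp: ff_def)
  also have "\<dots> = (\<Sum>x\<in>UNIV. \<Sum>y\<in>UNIV. pmf P x * pmf Q y * ff T x y)"
    unfolding UNIV_Times_UNIV[symmetric] sum.cartesian_product
    by (intro sum.cong refl) (auto simp: pmf_pair split: prod.split)
  finally show ?thesis .
qed

lemma sip_count:
  fixes X Y :: "'a::{finite,field} set"
  assumes "X \<noteq> {}" "Y \<noteq> {}"
  shows "sum_in_prob (pmf_of_set X) (pmf_of_set Y) T = (\<Sum>x\<in>X. \<Sum>y\<in>Y. ff T x y) / (card X * card Y)"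
proof -
  have "sum_in_prob (pmf_of_set X) (pmf_of_set Y) T
     = (\<Sum>x\<in>UNIV. \<Sum>y\<in>UNIV. (indicator X x * indicator Y y * ff T x y) / (card X * card Y))"
    unfolding sip_sum using assms by (simp add: pmf_of_set)
  also have "\<dots> = (\<Sum>x\<in>X. \<Sum>y\<in>Y. ff T x y) / (card X * card Y)"
  proof -
    have e: "\<And>S::'a set. \<And>h::'a\<Rightarrow>real. (\<Sum>x\<in>UNIV. of_bool (x \<in> S) * h x) = (\<Sum>x\<in>S. h x)"
    proof -
      fix S :: "'a set" and h :: "'a \<Rightarrow> real"
      have "(\<Sum>x\<in>UNIV. of_bool (x \<in> S) * h x) = (\<Sum>x\<in>UNIV. if x \<in> S then h x else 0)"
        by (intro sum.cong) auto
      also have "\<dots> = sum h (UNIV \<inter> S)" by (rule sum.inter_restrict[symmetric]) simp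
      finally show "(\<Sum>x\<in>UNIV. of_bool (x \<in> S) * h x) = (\<Sum>x\<in>S. h x)" by simp
    qed
    have "(\<Sum>x\<in>UNIV. \<Sum>y\<in>UNIV. (indicator X x * indicator Y y * ff T x y) / (card X * card Y))
      = (\<Sum>x\<in>UNIV. of_bool (x \<in> X) * (\<Sum>y\<in>UNIV. of_bool (y \<in> Y) * ff T x y)) / (card X * card Y)"
      unfolding sum_divide_distrib sum_distrib_left indicator_def by (simp only: mult.assoc)
    then show ?thesis by (simp only: e)
  qed
  finally show ?thesis .
qed

lemma row:
  fixes T :: "'a::{finite,field} set"
  shows "(\<Sum>y\<in>UNIV. ff T x y) = card T"
proof -
  have "(\<Sum>y\<in>UNIV. ff T x y) = card {y. x + y \<in> T}" by (simp add: ff_def sum.If_cases)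
  also have "{y. x + y \<in> T} = (\<lambda>t. t - x) ` T" by (auto simp: image_iff algebra_simps)
  also have "card \<dots> = card T" by (rule card_image) (simp add: inj_on_def)
  finally show ?thesis .
qed

lemma col:
  fixes T :: "'a::{finite,field} set"
  shows "(\<Sum>x\<in>UNIV. ff T x y) = card T"
proof -
  have "(\<Sum>x\<in>UNIV. ff T x y) = card {x. x + y \<in> T}" by (simp add: ff_def sum.If_cases)
  also have "{x. x + y \<in> T} = (\<lambda>t. t - y) ` T" by (auto simp: image_iff algebra_simps)
  also have "card \<dots> = card T" by (rule card_image) (simp add: inj_on_def)
  finally show ?thesis .
qed

definition SS :: "'a::{finite,field} set \<Rightarrow> 'a set \<Rightarrow> 'a set \<Rightarrow> real" where
  "SS T X Y = (\<Sum>x\<in>X. \<Sum>y\<in>Y. ff T x y)"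

lemma SS_right: "SS T X Y + SS T X (UNIV - Y) = SS T X UNIV"
  unfolding SS_def sum.distrib[symmetric]
  by (intro sum.cong refl) (metis add.commute finite subset_UNIV sum.subset_diff)

lemma SS_left: "SS T X Y + SS T (UNIV - X) Y = SS T UNIV Y"
proof -
  have sw: "\<And>X Y. SS T X Y = (\<Sum>y\<in>Y. \<Sum>x\<in>X. ff T x y)" unfolding SS_def by (rule sum.swap)
  show ?thesis unfolding sw sum.distrib[symmetric]
    by (intro sum.cong refl) (metis add.commute finite subset_UNIV sum.subset_diff)
qed

lemma SS_UNIV_right: "SS T X UNIV = card X * card T"
  unfolding SS_def row by simp

lemma SS_UNIV_left: "SS T UNIV Y = card Y * card T"
proof -
  have "SS T UNIV Y = (\<Sum>y\<in>Y. \<Sum>x\<in>UNIV. ff T x y)" unfolding SS_def by (rule sum.swap)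
  then show ?thesis by (simp add: col)
qed

lemma SS_nonneg: "SS T X Y \<ge> 0"
  unfolding SS_def ff_def by (intro sum_nonneg) auto

lemma alg:
  fixes a L m w1 w2 :: real
  assumes "L > 0" "m > 0" "a \<le> L*L" "0 < w1" "w1 < m / (L + m)" "0 < w2" "w2 < m / (L + m)"
  shows "(1 - w1) * (1 - w2) * (a / (L*L))
       + w1 * (1 - w2) * ((L*L - a) / (L*m))
       + w2 * (1 - w1) * ((L*L - a) / (m*L))
       + w1 * w2 * ((m*L - (L*L - a)) / (m*m))
       \<le> (1 - w1) * (1 - w2) + w1 * w2 * (L / m)"
proof -
  define c1 where "c1 = (1-w1)/L - w1/m"
  define c2 where "c2 = (1-w2)/L - w2/m"
  have "w1 * (L+m) < m" using assms by (simp add: field_simps)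
  then have "c1 > 0" unfolding c1_def using assms by (simp add: field_simps)
  have "w2 * (L+m) < m" using assms by (simp add: field_simps)
  then have "c2 > 0" unfolding c2_def using assms by (simp add: field_simps)
  have eq: "(1 - w1) * (1 - w2) * (a / (L*L))
       + w1 * (1 - w2) * ((L*L - a) / (L*m))
       + w2 * (1 - w1) * ((L*L - a) / (m*L))
       + w1 * w2 * ((m*L - (L*L - a)) / (m*m))
       = (1 - w1) * (1 - w2) + w1 * w2 * (L / m) + (a - L*L) * (c1 * c2)"
    unfolding c1_def c2_def using assms by (simp add: field_simps)
  have "(a - L*L) * (c1 * c2) \<le> 0"
    using assms \<open>c1 > 0\<close> \<open>c2 > 0\<close> by (intro mult_nonpos_nonneg) auto
  then show ?thesis unfolding eq by linarith
qed

theorem lemma4p2: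
  fixes A B T :: "'a::{finite,field} set" and l :: nat and w1 w2 :: real
  assumes "1 \<le> l" "l \<le> CARD('a)"
    and "0 < w1" "w1 < 1 - real l / real CARD('a)"
    and "0 < w2" "w2 < 1 - real l / real CARD('a)"
    and "card A = l" "card B = l" "card T = l"
  shows "(1 - w1) * (1 - w2) * sum_in_prob (pmf_of_set A) (pmf_of_set B) T
       + w1 * (1 - w2) * sum_in_prob (pmf_of_set A) (pmf_of_set (UNIV - B)) T
       + w2 * (1 - w1) * sum_in_prob (pmf_of_set (UNIV - A)) (pmf_of_set B) T
       + w1 * w2 * sum_in_prob (pmf_of_set (UNIV - A)) (pmf_of_set (UNIV - B)) T
       \<le> (1 - w1) * (1 - w2) + w1 * w2 * (real l / (real CARD('a) - real l))"
proof -
  define q where "q = real CARD('a)"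
  define L where "L = real l"
  define m where "m = q - L"
  have qpos: "q > 0" unfolding q_def by simp
  have L0: "L > 0" unfolding L_def using assms(1) by simp
  have "real l / q < 1" using assms(3,4) unfolding q_def by linarith
  then have "L < q" using qpos unfolding L_def by (simp add: field_simps)
  then have m0: "m > 0" unfolding m_def by simp
  have wb: "1 - real l / real CARD('a) = m / (L + m)"
    unfolding m_def L_def[symmetric] q_def[symmetric] using qpos by (simp add: field_simps)
  have lq: "l < CARD('a)" using \<open>L < q\<close> unfolding L_def q_def by simp
  have cA: "card (UNIV - A) = CARD('a) - l" using assms(7) by (simp add: card_Diff_subset)
  have cB: "card (UNIV - B) = CARD('a) - l" using assms(8) by (simp add: card_Diff_subset)
  have rc: "real (CARD('a) - l) = m" unfolding m_def q_def L_def using lq by simp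
  have ne: "A \<noteq> {}" "B \<noteq> {}" using assms(1,7,8) by auto
  have "card (UNIV - A) > 0" "card (UNIV - B) > 0" using cA cB lq by simp_all
  then have ne2: "UNIV - A \<noteq> {}" "UNIV - B \<noteq> {}" by (auto simp only: card_gt_0_iff)
  define a where "a = SS T A B"
  have s1: "SS T A (UNIV - B) = L*L - a"
    using SS_right[of T A B] SS_UNIV_right[of T A] assms unfolding a_def L_def by simp
  have s2: "SS T (UNIV - A) B = L*L - a"
    using SS_left[of T A B] SS_UNIV_left[of T B] assms unfolding a_def L_def by simp
  have s3: "SS T (UNIV - A) (UNIV - B) = m*L - (L*L - a)"
    using SS_right[of T "UNIV - A" B] SS_UNIV_right[of T "UNIV - A"] s2 cA rc assms(9)
    unfolding L_def by simp
  have "a \<le> L*L" using s1 SS_nonneg[of T A "UNIV - B"] by simp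
  have "?thesis = ((1 - w1) * (1 - w2) * (a / (L*L))
       + w1 * (1 - w2) * ((L*L - a) / (L*m))
       + w2 * (1 - w1) * ((L*L - a) / (m*L))
       + w1 * w2 * ((m*L - (L*L - a)) / (m*m))
       \<le> (1 - w1) * (1 - w2) + w1 * w2 * (L / m))"
    using ne ne2 s1 s2 s3 cA cB rc assms(7,8)
    by (simp add: sip_count SS_def[symmetric] a_def[symmetric] L_def[symmetric] m_def q_def)
  then show ?thesis using alg[OF L0 m0 \<open>a \<le> L*L\<close> assms(3) _ assms(5)] assms(4,6) wb by simp
qed

end
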